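(* Let $Y$ and $X$ be real-valued square integrable random variables on a common probability space, and let $\mathcal{H}_0=\{\delta(X)\in L^2:\ \delta:\mathbb{R}\to\mathbb{R}\text{ measurable},\ E[\delta(X)]=0\}$. Then $$\iota_X(Y)=\sup_{\delta(X)\in\mathcal{H}_0}\frac{E[Y\delta(X)]}{\operatorname{SD}[\delta(X)]}=\sup_{\delta(X)\in\mathcal{H}_0,\ \delta(X)\ge -1}\frac{E[Y\delta(X)]}{\operatorname{SD}[\delta(X)]},$$ where both suprema range over those $\delta(X)$ with $\operatorname{SD}[\delta(X)]>0$.
   Context: The mean impact of $X$ on $Y$ is $\iota_X(Y)=\sup\{E[Y\delta(X)]:\ \delta\text{ measurable},\ \delta(X)\in L^2,\ E[\delta(X)]=0,\ E[\delta^2(X)]=1\}$. $\operatorname{SD}$ denotes standard deviation. *)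

theory Defs
  imports "HOL-Probability.Probability"
begin

definition SD :: "'a measure \<Rightarrow> ('a \<Rightarrow> real) \<Rightarrow> real" where
  "SD M f = sqrt (integral\<^sup>L M (\<lambda>\<omega>. (f \<omega> - integral\<^sup>L M f)\<^sup>2))"

definition H0 :: "'a measure \<Rightarrow> ('a \<Rightarrow> real) \<Rightarrow> (real \<Rightarrow> real) set" where
  "H0 M X = {\<delta>. \<delta> \<in> borel_measurable borel
                 \<and> integrable M (\<lambda>\<omega>. (\<delta> (X \<omega>))\<^sup>2)
                 \<and> integral\<^sup>L M (\<lambda>\<omega>. \<delta> (X \<omega>)) = 0}"

definition mean_impact :: "'a measure \<Rightarrow> ('a \<Rightarrow> real) \<Rightarrow> ('a \<Rightarrow> real) \<Rightarrow> ereal" where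
  "mean_impact M X Y =
     (SUP \<delta> \<in> {\<delta> \<in> H0 M X. integral\<^sup>L M (\<lambda>\<omega>. (\<delta> (X \<omega>))\<^sup>2) = 1}.
        ereal (integral\<^sup>L M (\<lambda>\<omega>. Y \<omega> * \<delta> (X \<omega>))))"

end

theory Submission
  imports Defs
begin


lemma int_prod:
  fixes Y g :: "'a \<Rightarrow> real"
  assumes "prob_space M" "Y \<in> borel_measurable M" "g \<in> borel_measurable M"
    "integrable M (\<lambda>\<omega>. (Y \<omega>)\<^sup>2)" "integrable M (\<lambda>\<omega>. (g \<omega>)\<^sup>2)"
  shows "integrable M (\<lambda>\<omega>. Y \<omega> * g \<omega>)"
proof (rule Bochner_Integration.integrable_bound[where f="\<lambda>\<omega>. (Y \<omega>)\<^sup>2 + (g \<omega>)\<^sup>2"])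
  show "integrable M (\<lambda>\<omega>. (Y \<omega>)\<^sup>2 + (g \<omega>)\<^sup>2)" using assms by auto
  show "(\<lambda>\<omega>. Y \<omega> * g \<omega>) \<in> borel_measurable M" using assms by measurable
  show "AE x in M. norm (Y x * g x) \<le> norm ((Y x)\<^sup>2 + (g x)\<^sup>2)"
  proof (rule AE_I2)
    fix x
    have "\<bar>Y x * g x\<bar> \<le> (Y x)\<^sup>2 + (g x)\<^sup>2"
    proof -
      have "0 \<le> (\<bar>Y x\<bar> - \<bar>g x\<bar>)\<^sup>2" by simp
      then have "2 * (\<bar>Y x\<bar> * \<bar>g x\<bar>) \<le> (Y x)\<^sup>2 + (g x)\<^sup>2"
        by (simp add: power2_diff)
      moreover have "0 \<le> \<bar>Y x\<bar> * \<bar>g x\<bar>" by simp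
      ultimately have "\<bar>Y x\<bar> * \<bar>g x\<bar> \<le> (Y x)\<^sup>2 + (g x)\<^sup>2" by linarith
      then show ?thesis by (simp add: abs_mult)
    qed
    then show "norm (Y x * g x) \<le> norm ((Y x)\<^sup>2 + (g x)\<^sup>2)" by simp
  qed
qed

lemma SD_H0:
  assumes "\<delta> \<in> H0 M X"
  shows "SD M (\<lambda>\<omega>. \<delta> (X \<omega>)) = sqrt (integral\<^sup>L M (\<lambda>\<omega>. (\<delta> (X \<omega>))\<^sup>2))"
  using assms unfolding SD_def H0_def by simp

lemma H0_scale:
  assumes "\<delta> \<in> H0 M X"
  shows "(\<lambda>x. c * \<delta> x) \<in> H0 M X"
proof -
  have "integrable M (\<lambda>\<omega>. c\<^sup>2 * (\<delta> (X \<omega>))\<^sup>2)" using assms unfolding H0_def by auto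
  then show ?thesis using assms unfolding H0_def by (auto simp: power_mult_distrib)
qed

lemma SD_scale:
  assumes "\<delta> \<in> H0 M X" "c > 0"
  shows "SD M (\<lambda>\<omega>. c * \<delta> (X \<omega>)) = c * SD M (\<lambda>\<omega>. \<delta> (X \<omega>))"
proof -
  have "SD M (\<lambda>\<omega>. c * \<delta> (X \<omega>)) = sqrt (integral\<^sup>L M (\<lambda>\<omega>. (c * \<delta> (X \<omega>))\<^sup>2))"
    using SD_H0[OF H0_scale[OF assms(1), of c]] by simp
  also have "\<dots> = sqrt (c\<^sup>2 * integral\<^sup>L M (\<lambda>\<omega>. (\<delta> (X \<omega>))\<^sup>2))"
    by (simp add: power_mult_distrib)
  also have "\<dots> = c * SD M (\<lambda>\<omega>. \<delta> (X \<omega>))"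
    using assms by (simp add: SD_H0 real_sqrt_mult)
  finally show ?thesis .
qed

lemma ratio_scale:
  assumes "\<delta> \<in> H0 M X" "c > 0"
  shows "integral\<^sup>L M (\<lambda>\<omega>. Y \<omega> * (c * \<delta> (X \<omega>))) / SD M (\<lambda>\<omega>. c * \<delta> (X \<omega>))
       = integral\<^sup>L M (\<lambda>\<omega>. Y \<omega> * \<delta> (X \<omega>)) / SD M (\<lambda>\<omega>. \<delta> (X \<omega>))"
proof -
  have "integral\<^sup>L M (\<lambda>\<omega>. Y \<omega> * (c * \<delta> (X \<omega>))) = c * integral\<^sup>L M (\<lambda>\<omega>. Y \<omega> * \<delta> (X \<omega>))"
    by (simp add: mult.left_commute)
  then show ?thesis using SD_scale[OF assms] assms(2) by simp
qed


lemma approx: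
  fixes M :: "'a measure" and X Y :: "'a \<Rightarrow> real"
  assumes P: "prob_space M" and XM: "X \<in> borel_measurable M" and YM: "Y \<in> borel_measurable M"
    and Y2: "integrable M (\<lambda>\<omega>. (Y \<omega>)\<^sup>2)" and dH: "\<delta> \<in> H0 M X"
    and sp: "SD M (\<lambda>\<omega>. \<delta> (X \<omega>)) > 0"
  shows "ereal (integral\<^sup>L M (\<lambda>\<omega>. Y \<omega> * \<delta> (X \<omega>)) / SD M (\<lambda>\<omega>. \<delta> (X \<omega>)))
     \<le> (SUP \<delta> \<in> {\<delta> \<in> H0 M X. SD M (\<lambda>\<omega>. \<delta> (X \<omega>)) > 0
                          \<and> (AE \<omega> in M. \<delta> (X \<omega>) \<ge> -1)}.
              ereal (integral\<^sup>L M (\<lambda>\<omega>. Y \<omega> * \<delta> (X \<omega>)) / SD M (\<lambda>\<omega>. \<delta> (X \<omega>))))"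
    (is "_ \<le> ?S")
proof -
  interpret prob_space M by fact
  have dmeas: "\<delta> \<in> borel_measurable borel" and d2: "integrable M (\<lambda>\<omega>. (\<delta> (X \<omega>))\<^sup>2)"
    and d0: "integral\<^sup>L M (\<lambda>\<omega>. \<delta> (X \<omega>)) = 0" using dH unfolding H0_def by auto
  have gM: "(\<lambda>\<omega>. \<delta> (X \<omega>)) \<in> borel_measurable M"
    using measurable_compose[OF XM dmeas] by (simp add: comp_def)
  have gI: "integrable M (\<lambda>\<omega>. \<delta> (X \<omega>))"
    by (rule square_integrable_imp_integrable[OF gM d2])
  have YI: "integrable M Y"
    by (rule square_integrable_imp_integrable[OF YM Y2])
  have YgI: "integrable M (\<lambda>\<omega>. Y \<omega> * \<delta> (X \<omega>))"
    by (rule int_prod[OF P YM gM Y2 d2])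
  define f where "f n x = max (\<delta> x) (- real n)" for n :: nat and x
  define m where "m n = integral\<^sup>L M (\<lambda>\<omega>. f n (X \<omega>))" for n
  have fM: "f n \<in> borel_measurable borel" for n unfolding f_def using dmeas by measurable
  have FM: "(\<lambda>\<omega>. f n (X \<omega>)) \<in> borel_measurable M" for n
    using measurable_compose[OF XM fM] by (simp add: comp_def)
  have bound: "\<bar>f n x\<bar> \<le> \<bar>\<delta> x\<bar>" for n x unfolding f_def by auto
  have ptw: "(\<lambda>n. f n x) \<longlonglongrightarrow> \<delta> x" for x
  proof (rule tendsto_eventually)
    have "\<forall>n \<ge> nat \<lceil>- \<delta> x\<rceil>. f n x = \<delta> x"
    proof (intro allI impI)
      fix n assume "nat \<lceil>- \<delta> x\<rceil> \<le> n"
      then have "- \<delta> x \<le> real n" by linarith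
      then show "f n x = \<delta> x" unfolding f_def by auto
    qed
    then show "\<forall>\<^sub>F n in sequentially. f n x = \<delta> x" unfolding eventually_sequentially by blast
  qed
  have F2M: "(\<lambda>\<omega>. (f n (X \<omega>))\<^sup>2) \<in> borel_measurable M" for n using FM by measurable
  have YFM: "(\<lambda>\<omega>. Y \<omega> * f n (X \<omega>)) \<in> borel_measurable M" for n using FM YM by measurable
  have b2: "norm ((f n (X \<omega>))\<^sup>2) \<le> (\<delta> (X \<omega>))\<^sup>2" for n \<omega>
    using bound[of n "X \<omega>"] by (simp add: abs_le_square_iff)
  have b1: "norm (f n (X \<omega>)) \<le> \<bar>\<delta> (X \<omega>)\<bar>" for n \<omega> using bound by simp
  have b3: "norm (Y \<omega> * f n (X \<omega>)) \<le> \<bar>Y \<omega> * \<delta> (X \<omega>)\<bar>" for n \<omega>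
    using bound[of n "X \<omega>"] by (simp add: abs_mult mult_left_mono)
  have F2I: "integrable M (\<lambda>\<omega>. (f n (X \<omega>))\<^sup>2)" for n
    by (rule Bochner_Integration.integrable_bound[OF d2 F2M]) (use b2 in auto)
  have FI: "integrable M (\<lambda>\<omega>. f n (X \<omega>))" for n
    by (rule Bochner_Integration.integrable_bound[OF gI FM]) (use b1 in auto)
  have YFI: "integrable M (\<lambda>\<omega>. Y \<omega> * f n (X \<omega>))" for n
    by (rule Bochner_Integration.integrable_bound[OF YgI YFM]) (use b3 in auto)
  have lim_m: "m \<longlonglongrightarrow> 0"
    unfolding m_def d0[symmetric]
    by (rule integral_dominated_convergence[where w="\<lambda>\<omega>. \<bar>\<delta> (X \<omega>)\<bar>"])
       (use gM FM gI b1 ptw in auto)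
  have lim_YF: "(\<lambda>n. integral\<^sup>L M (\<lambda>\<omega>. Y \<omega> * f n (X \<omega>))) \<longlonglongrightarrow> integral\<^sup>L M (\<lambda>\<omega>. Y \<omega> * \<delta> (X \<omega>))"
    by (rule integral_dominated_convergence[where w="\<lambda>\<omega>. \<bar>Y \<omega> * \<delta> (X \<omega>)\<bar>"])
       (use YgI YFM b3 ptw YM gM in \<open>auto intro!: AE_I2 tendsto_mult[OF tendsto_const ptw]\<close>)
  have lim_F2: "(\<lambda>n. integral\<^sup>L M (\<lambda>\<omega>. (f n (X \<omega>))\<^sup>2)) \<longlonglongrightarrow> integral\<^sup>L M (\<lambda>\<omega>. (\<delta> (X \<omega>))\<^sup>2)"
    by (rule integral_dominated_convergence[where w="\<lambda>\<omega>. (\<delta> (X \<omega>))\<^sup>2"])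
       (use d2 F2M b2 ptw gM in \<open>auto intro!: AE_I2 tendsto_power[OF ptw]\<close>)
  define a where "a n = integral\<^sup>L M (\<lambda>\<omega>. Y \<omega> * f n (X \<omega>)) - m n * integral\<^sup>L M Y" for n
  define v where "v n = integral\<^sup>L M (\<lambda>\<omega>. (f n (X \<omega>))\<^sup>2) - (m n)\<^sup>2" for n
  have lim_a: "a \<longlonglongrightarrow> integral\<^sup>L M (\<lambda>\<omega>. Y \<omega> * \<delta> (X \<omega>))"
    unfolding a_def using tendsto_diff[OF lim_YF tendsto_mult[OF lim_m tendsto_const]] by simp
  have lim_v: "v \<longlonglongrightarrow> integral\<^sup>L M (\<lambda>\<omega>. (\<delta> (X \<omega>))\<^sup>2)"
    unfolding v_def using tendsto_diff[OF lim_F2 tendsto_power[OF lim_m, of 2]] by simp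
  have s_eq: "SD M (\<lambda>\<omega>. \<delta> (X \<omega>)) = sqrt (integral\<^sup>L M (\<lambda>\<omega>. (\<delta> (X \<omega>))\<^sup>2))"
    by (rule SD_H0[OF dH])
  have lim_sv: "(\<lambda>n. sqrt (v n)) \<longlonglongrightarrow> SD M (\<lambda>\<omega>. \<delta> (X \<omega>))"
    unfolding s_eq by (rule tendsto_real_sqrt[OF lim_v])
  have lim_r: "(\<lambda>n. a n / sqrt (v n)) \<longlonglongrightarrow>
      integral\<^sup>L M (\<lambda>\<omega>. Y \<omega> * \<delta> (X \<omega>)) / SD M (\<lambda>\<omega>. \<delta> (X \<omega>))"
    by (rule tendsto_divide[OF lim_a lim_sv]) (use sp in auto)
  have ev: "eventually (\<lambda>n. sqrt (v n) > 0) sequentially"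
    using order_tendstoD(1)[OF lim_sv sp] .
  have key: "ereal (a n / sqrt (v n)) \<le> ?S" if vn: "sqrt (v n) > 0" for n
  proof -
    define d where "d x = f n x - m n" for x
    have dM: "d \<in> borel_measurable borel" unfolding d_def using fM[of n] by measurable
    have eq2: "(\<lambda>\<omega>. (d (X \<omega>))\<^sup>2) = (\<lambda>\<omega>. (f n (X \<omega>))\<^sup>2 - 2 * m n * f n (X \<omega>) + (m n)\<^sup>2)"
      unfolding d_def by (simp add: power2_diff algebra_simps)
    have d2I: "integrable M (\<lambda>\<omega>. (d (X \<omega>))\<^sup>2)"
      unfolding eq2 using F2I[of n] FI[of n] by auto
    have dE: "integral\<^sup>L M (\<lambda>\<omega>. d (X \<omega>)) = 0"
      unfolding d_def using FI[of n] by (simp add: m_def prob_space)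
    have dH0: "d \<in> H0 M X" unfolding H0_def using dM d2I dE by auto
    have dv: "integral\<^sup>L M (\<lambda>\<omega>. (d (X \<omega>))\<^sup>2) = v n"
      unfolding eq2 v_def using F2I[of n] FI[of n]
      by (simp add: m_def power2_eq_square prob_space)
    have da: "integral\<^sup>L M (\<lambda>\<omega>. Y \<omega> * d (X \<omega>)) = a n"
    proof -
      have "(\<lambda>\<omega>. Y \<omega> * d (X \<omega>)) = (\<lambda>\<omega>. Y \<omega> * f n (X \<omega>) - m n * Y \<omega>)"
        unfolding d_def by (auto simp: algebra_simps)
      then show ?thesis unfolding a_def using YFI[of n] YI by simp
    qed
    have dSD: "SD M (\<lambda>\<omega>. d (X \<omega>)) = sqrt (v n)" using SD_H0[OF dH0] dv by simp
    define c where "c = 1 / (real n + \<bar>m n\<bar> + 1)"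
    have cpos: "c > 0" unfolding c_def by (simp add: add_nonneg_pos)
    have cH: "(\<lambda>x. c * d x) \<in> H0 M X" by (rule H0_scale[OF dH0])
    have cSD: "SD M (\<lambda>\<omega>. c * d (X \<omega>)) > 0"
      using SD_scale[OF dH0 cpos] dSD vn cpos by simp
    have cge: "c * d x \<ge> -1" for x
    proof -
      have "d x \<ge> - (real n + \<bar>m n\<bar> + 1)" unfolding d_def f_def by auto
      then have "c * d x \<ge> c * (- (real n + \<bar>m n\<bar> + 1))"
        using cpos by (intro mult_left_mono) auto
      also have "c * (- (real n + \<bar>m n\<bar> + 1)) = -1"
        unfolding c_def by (simp add: field_simps add_nonneg_pos)
      finally show ?thesis .
    qed
    have mem: "(\<lambda>x. c * d x) \<in> {\<delta> \<in> H0 M X. SD M (\<lambda>\<omega>. \<delta> (X \<omega>)) > 0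
                          \<and> (AE \<omega> in M. \<delta> (X \<omega>) \<ge> -1)}"
      using cH cSD cge by auto
    have val: "ereal (integral\<^sup>L M (\<lambda>\<omega>. Y \<omega> * (c * d (X \<omega>))) / SD M (\<lambda>\<omega>. c * d (X \<omega>)))
        = ereal (a n / sqrt (v n))"
      using ratio_scale[OF dH0 cpos, of Y] cSD da dSD by simp
    show ?thesis
      using SUP_upper[OF mem, of "\<lambda>\<delta>. ereal (integral\<^sup>L M (\<lambda>\<omega>. Y \<omega> * \<delta> (X \<omega>)) / SD M (\<lambda>\<omega>. \<delta> (X \<omega>)))"]
      unfolding val by simp
  qed
  have "ereal (integral\<^sup>L M (\<lambda>\<omega>. Y \<omega> * \<delta> (X \<omega>)) / SD M (\<lambda>\<omega>. \<delta> (X \<omega>))) \<le> ?S"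
    by (rule tendsto_le[OF trivial_limit_sequentially tendsto_const tendsto_ereal[OF lim_r]])
       (use ev key in \<open>auto elim: eventually_mono\<close>)
  then show ?thesis using sp by simp
qed


theorem mainTheorem5:
  fixes M :: "'a measure" and X Y :: "'a \<Rightarrow> real"
  assumes "prob_space M"
    and "X \<in> borel_measurable M" and "Y \<in> borel_measurable M"
    and "integrable M (\<lambda>\<omega>. (X \<omega>)\<^sup>2)" and "integrable M (\<lambda>\<omega>. (Y \<omega>)\<^sup>2)"
  shows "mean_impact M X Y =
           (SUP \<delta> \<in> {\<delta> \<in> H0 M X. SD M (\<lambda>\<omega>. \<delta> (X \<omega>)) > 0}.
              ereal (integral\<^sup>L M (\<lambda>\<omega>. Y \<omega> * \<delta> (X \<omega>)) / SD M (\<lambda>\<omega>. \<delta> (X \<omega>))))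
       \<and> mean_impact M X Y =
           (SUP \<delta> \<in> {\<delta> \<in> H0 M X. SD M (\<lambda>\<omega>. \<delta> (X \<omega>)) > 0
                          \<and> (AE \<omega> in M. \<delta> (X \<omega>) \<ge> -1)}.
              ereal (integral\<^sup>L M (\<lambda>\<omega>. Y \<omega> * \<delta> (X \<omega>)) / SD M (\<lambda>\<omega>. \<delta> (X \<omega>))))"
  proof -
  let ?R = "\<lambda>\<delta>. ereal (integral\<^sup>L M (\<lambda>\<omega>. Y \<omega> * \<delta> (X \<omega>)) / SD M (\<lambda>\<omega>. \<delta> (X \<omega>)))"
  let ?B = "{\<delta> \<in> H0 M X. SD M (\<lambda>\<omega>. \<delta> (X \<omega>)) > 0}"
  let ?C = "{\<delta> \<in> H0 M X. SD M (\<lambda>\<omega>. \<delta> (X \<omega>)) > 0 \<and> (AE \<omega> in M. \<delta> (X \<omega>) \<ge> -1)}"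
  have eq1: "mean_impact M X Y = (SUP \<delta> \<in> ?B. ?R \<delta>)"
  proof (rule antisym)
    show "mean_impact M X Y \<le> (SUP \<delta> \<in> ?B. ?R \<delta>)"
      unfolding mean_impact_def
    proof (rule SUP_mono)
      fix \<delta> assume "\<delta> \<in> {\<delta> \<in> H0 M X. integral\<^sup>L M (\<lambda>\<omega>. (\<delta> (X \<omega>))\<^sup>2) = 1}"
      then have h: "\<delta> \<in> H0 M X" "integral\<^sup>L M (\<lambda>\<omega>. (\<delta> (X \<omega>))\<^sup>2) = 1" by auto
      then have "SD M (\<lambda>\<omega>. \<delta> (X \<omega>)) = 1" using SD_H0[OF h(1)] by simp
      then show "\<exists>m\<in>?B. ereal (integral\<^sup>L M (\<lambda>\<omega>. Y \<omega> * \<delta> (X \<omega>))) \<le> ?R m"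
        using h by (intro bexI[of _ \<delta>]) auto
    qed
    show "(SUP \<delta> \<in> ?B. ?R \<delta>) \<le> mean_impact M X Y"
      unfolding mean_impact_def
    proof (rule SUP_mono)
      fix \<delta> assume "\<delta> \<in> ?B"
      then have h: "\<delta> \<in> H0 M X" "SD M (\<lambda>\<omega>. \<delta> (X \<omega>)) > 0" by auto
      define s where "s = SD M (\<lambda>\<omega>. \<delta> (X \<omega>))"
      have sp: "1 / s > 0" using h(2) s_def by simp
      have H: "(\<lambda>x. (1/s) * \<delta> x) \<in> H0 M X" by (rule H0_scale[OF h(1)])
      have S1: "SD M (\<lambda>\<omega>. (1/s) * \<delta> (X \<omega>)) = 1"
        using SD_scale[OF h(1) sp] h(2) s_def by simp
      have E1: "integral\<^sup>L M (\<lambda>\<omega>. ((1/s) * \<delta> (X \<omega>))\<^sup>2) = 1"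
        using SD_H0[OF H] S1 by simp
      have V: "integral\<^sup>L M (\<lambda>\<omega>. Y \<omega> * ((1/s) * \<delta> (X \<omega>))) = integral\<^sup>L M (\<lambda>\<omega>. Y \<omega> * \<delta> (X \<omega>)) / s"
        using ratio_scale[OF h(1) sp, of Y] S1 s_def by simp
      show "\<exists>m\<in>{\<delta> \<in> H0 M X. integral\<^sup>L M (\<lambda>\<omega>. (\<delta> (X \<omega>))\<^sup>2) = 1}.
              ?R \<delta> \<le> ereal (integral\<^sup>L M (\<lambda>\<omega>. Y \<omega> * m (X \<omega>)))"
        using H E1 V s_def by (intro bexI[of _ "\<lambda>x. (1/s) * \<delta> x"]) auto
    qed
  qed
  have eq2: "(SUP \<delta> \<in> ?B. ?R \<delta>) = (SUP \<delta> \<in> ?C. ?R \<delta>)"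
  proof (rule antisym)
    show "(SUP \<delta> \<in> ?B. ?R \<delta>) \<le> (SUP \<delta> \<in> ?C. ?R \<delta>)"
    proof (rule SUP_least)
      fix \<delta> assume "\<delta> \<in> ?B"
      then show "?R \<delta> \<le> (SUP \<delta> \<in> ?C. ?R \<delta>)"
        using approx[OF assms(1,2,3,5)] by auto
    qed
    show "(SUP \<delta> \<in> ?C. ?R \<delta>) \<le> (SUP \<delta> \<in> ?B. ?R \<delta>)"
      by (rule SUP_subset_mono) auto
  qed
  show ?thesis using eq1 eq2 by simp
qed

end
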